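(* Let $u$ be a positive integer, $\mathcal F$ and $\mathcal C$ finite sets, and let $x_{i,j}\ge0$ ($i\in\mathcal F,j\in\mathcal C$) and $y_i\ge0$ ($i\in\mathcal F$) satisfy $\sum_{i\in\mathcal F}x_{i,j}=1$ for every $j\in\mathcal C$. Let $\mathcal B\subseteq\mathcal F$ and suppose that $x_{\mathcal B,\mathcal J}\le f(|\mathcal J|,y_{\mathcal B})$ for every $\mathcal J\subseteq\mathcal C$. Let $y'_{\mathcal B}=\frac1u\sum_{j\in\mathcal C}x_{\mathcal B,j}$ and suppose $y'_{\mathcal B}\ge\lfloor y_{\mathcal B}\rfloor$. Then $$\sum_{j\in\mathcal C}x_{\mathcal B,j}(1-x_{\mathcal B,j})\ \ge\ u\,\big(y'_{\mathcal B}-\lfloor y'_{\mathcal B}\rfloor\big)\big(\lceil y_{\mathcal B}\rceil-y_{\mathcal B}\big).$$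
   Context: Notation: $y_{\mathcal B}=\sum_{i\in\mathcal B}y_i$, $x_{\mathcal B,j}=\sum_{i\in\mathcal B}x_{i,j}$, $x_{\mathcal B,\mathcal J}=\sum_{i\in\mathcal B,j\in\mathcal J}x_{i,j}$. The function $f:\mathbb Z_{\ge0}\times\mathbb R_{\ge0}\to\mathbb R$ is defined by $f(p,q)=qu$ if $q\le\lfloor p/u\rfloor$; $f(p,q)=u\lfloor p/u\rfloor+u(p/u-\lfloor p/u\rfloor)(q-\lfloor p/u\rfloor)$ if $\lfloor p/u\rfloor<q<\lceil p/u\rceil$; $f(p,q)=p$ if $q\ge\lceil p/u\rceil$. *)

theory Defs
  imports "HOL-Analysis.Analysis"
begin

definition capf :: "nat \<Rightarrow> nat \<Rightarrow> real \<Rightarrow> real" where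
  "capf u p q =
     (let a = real_of_int \<lfloor>real p / real u\<rfloor>; b = real_of_int \<lceil>real p / real u\<rceil> in
      if q \<le> a then q * real u
      else if q < b then real u * a + real u * (real p / real u - a) * (q - a)
      else real p)"

end

theory Submission
  imports Defs
begin

lemma capf_le_p:
  assumes "u > 0"
  shows "capf u p q \<le> real p"
proof -
  define a where "a = real_of_int \<lfloor>real p / real u\<rfloor>"
  define b where "b = real_of_int \<lceil>real p / real u\<rceil>"
  have u: "real u > 0" using assms by simp
  have a1: "a * real u \<le> real p" unfolding a_def
    using u by (metis floor_divide_lower)
  have a2: "real p / real u - a \<ge> 0" unfolding a_def by linarith
  have ba: "b \<le> a + 1" unfolding a_def b_def by (simp add: ceiling_altdef)
  have e: "real u * (real p / real u - a) = real p - real u * a" using u by (simp add: field_simps)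
  show ?thesis
  proof (cases "q \<le> a")
    case True
    then have "q * real u \<le> a * real u" using u by (simp add: mult_right_mono)
    then show ?thesis using True a1 unfolding capf_def a_def[symmetric] b_def[symmetric] Let_def by simp
  next
    case False
    show ?thesis
    proof (cases "q < b")
      case True
      have "real u * (real p / real u - a) * (q - a) \<le> real u * (real p / real u - a) * 1"
        apply (rule mult_left_mono) using True ba u a2 by auto
      then show ?thesis using False True e unfolding capf_def a_def[symmetric] b_def[symmetric] Let_def by simp
    next
      case f2: False
      then show ?thesis using False unfolding capf_def a_def[symmetric] b_def[symmetric] Let_def by simp
    qed
  qed
qed

lemma capf_le_uq:
  assumes "u > 0"
  shows "capf u p q \<le> q * real u"
proof -
  define a where "a = real_of_int \<lfloor>real p / real u\<rfloor>"
  define b where "b = real_of_int \<lceil>real p / real u\<rceil>"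
  have u: "real u > 0" using assms by simp
  have a2: "real p / real u - a < 1" unfolding a_def by linarith
  have b1: "real p \<le> b * real u" unfolding b_def using u
    by (metis ceiling_correct pos_divide_le_eq)
  show ?thesis
  proof (cases "q \<le> a")
    case True
    then show ?thesis unfolding capf_def a_def[symmetric] b_def[symmetric] Let_def by simp
  next
    case False
    show ?thesis
    proof (cases "q < b")
      case True
      have "real u * (real p / real u - a) * (q - a) \<le> real u * 1 * (q - a)"
        apply (rule mult_right_mono) using False u a2 by auto
      then show ?thesis using False True unfolding capf_def a_def[symmetric] b_def[symmetric] Let_def
        by (simp add: algebra_simps)
    next
      case f2: False
      then have "b * real u \<le> q * real u" using u by (simp add: mult_right_mono)
      then show ?thesis using False f2 b1 unfolding capf_def a_def[symmetric] b_def[symmetric] Let_def by simp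
    qed
  qed
qed

lemma ceil_cases:
  fixes Y :: real
  obtains "Y = of_int \<lfloor>Y\<rfloor>" "\<lceil>Y\<rceil> = \<lfloor>Y\<rfloor>" | "Y \<noteq> of_int \<lfloor>Y\<rfloor>" "\<lceil>Y\<rceil> = \<lfloor>Y\<rfloor> + 1"
proof (cases "Y = of_int \<lfloor>Y\<rfloor>")
  case True
  have "\<lceil>Y\<rceil> = \<lfloor>Y\<rfloor>" using ceiling_altdef[of Y] by (simp only: if_P[OF True])
  then show ?thesis using that(1) True by blast
next
  case False
  have "\<lceil>Y\<rceil> = \<lfloor>Y\<rfloor> + 1" using ceiling_altdef[of Y] by (simp only: if_not_P[OF False])
  then show ?thesis using that(2) False by blast
qed

lemma capf_bound:
  assumes "u > 0" "Y \<ge> 0"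
  defines "k \<equiv> real_of_int \<lfloor>Y\<rfloor>" and "d \<equiv> real_of_int \<lceil>Y\<rceil> - Y"
  shows "capf u p Y \<le> (1 - d) * real p + d * real u * k"
proof -
  have u: "real u > 0" using assms by simp
  have d0: "d \<ge> 0" "d < 1" unfolding d_def by linarith+
  have k0: "k \<ge> 0" unfolding k_def using assms by simp
  show ?thesis
  proof (cases "real p \<le> real u * k")
    case True
    have "d * (real p) \<le> d * (real u * k)" using True d0 by (simp add: mult_left_mono)
    then show ?thesis using capf_le_p[OF assms(1), of p Y] by (simp add: algebra_simps)
  next
    case F1: False
    show ?thesis
    proof (cases "real p \<ge> real u * (k + 1)")
      case True
      show ?thesis
      proof (cases Y rule: ceil_cases)
        case 1
        have "real_of_int \<lceil>Y\<rceil> = real_of_int \<lfloor>Y\<rfloor>" using 1(2) by simp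
        then have "d = 0" unfolding d_def using 1(1) by linarith
        then show ?thesis using capf_le_p[OF assms(1), of p Y] by simp
      next
        case 2
        have "real_of_int \<lceil>Y\<rceil> = real_of_int \<lfloor>Y\<rfloor> + 1" using 2(2) by simp
        then have Yk: "Y = k + 1 - d" unfolding d_def k_def by linarith
        have m: "(1 - d) * real u \<le> (1-d) * (real p - real u * k)" using True d0
          by (intro mult_left_mono) (auto simp: algebra_simps)
        have m2: "real u - d*real u \<le> real p - d*real p - real u*k + d*real u*k"
          using m by (simp add: algebra_simps)
        have c: "capf u p Y \<le> Y * real u" by (rule capf_le_uq[OF assms(1)])
        have Yu: "Y * real u = k*real u + real u - d * real u" by (subst Yk) (simp add: algebra_simps)
        show ?thesis using c Yu m2 by (simp add: algebra_simps)
      qed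
    next
      case F2: False
      have fl: "\<lfloor>real p / real u\<rfloor> = \<lfloor>Y\<rfloor>"
      proof -
        have "k \<le> real p / real u" "real p / real u < k + 1" using F1 F2 u
          by (auto simp: field_simps)
        then show ?thesis unfolding k_def by (simp add: floor_eq_iff)
      qed
      have cl: "\<lceil>real p / real u\<rceil> = \<lfloor>Y\<rfloor> + 1"
      proof -
        have "k < real p / real u" "real p / real u < k + 1" using F1 F2 u
          by (auto simp: field_simps)
        then show ?thesis unfolding k_def by (simp add: ceiling_eq_iff)
      qed
      show ?thesis
      proof (cases Y rule: ceil_cases)
        case 1
        have "real_of_int \<lceil>Y\<rceil> = real_of_int \<lfloor>Y\<rfloor>" using 1(2) by simp
        then have "d = 0" unfolding d_def using 1(1) by linarith
        then show ?thesis using capf_le_p[OF assms(1), of p Y] by simp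
      next
        case 2
        have "real_of_int \<lceil>Y\<rceil> = real_of_int \<lfloor>Y\<rfloor> + 1" using 2(2) by simp
        then have Yk: "Y = k + 1 - d" unfolding d_def k_def by linarith
        have "k < Y" using 2(1) of_int_floor_le[of Y] unfolding k_def by linarith
        moreover have "Y < k + 1" unfolding k_def by linarith
        ultimately have "capf u p Y = real u * k + real u * (real p / real u - k) * (Y - k)"
          unfolding capf_def Let_def fl cl k_def by simp
        also have "\<dots> = real u * k + (real p - real u * k) * (1 - d)"
        proof -
          have e1: "real u * (real p / real u - k) = real p - real u * k" using u by (simp add: field_simps)
          have e2: "Y - k = 1 - d" using Yk by simp
          show ?thesis by (simp only: e1 e2)
        qed
        also have "\<dots> = (1 - d) * real p + d * real u * k" by (simp add: algebra_simps)
        finally show ?thesis by simp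
      qed
    qed
  qed
qed

theorem lemma3:
  fixes u :: nat and F :: "'f set" and C :: "'c set"
    and x :: "'f \<Rightarrow> 'c \<Rightarrow> real" and y :: "'f \<Rightarrow> real" and B :: "'f set"
  assumes "u > 0"
    and "finite F" and "finite C"
    and "\<And>i j. i \<in> F \<Longrightarrow> j \<in> C \<Longrightarrow> x i j \<ge> 0"
    and "\<And>i. i \<in> F \<Longrightarrow> y i \<ge> 0"
    and "\<And>j. j \<in> C \<Longrightarrow> (\<Sum>i\<in>F. x i j) = 1"
    and "B \<subseteq> F"
    and "\<And>J. J \<subseteq> C \<Longrightarrow> (\<Sum>i\<in>B. \<Sum>j\<in>J. x i j) \<le> capf u (card J) (\<Sum>i\<in>B. y i)"
    and "(1 / real u) * (\<Sum>j\<in>C. \<Sum>i\<in>B. x i j) \<ge> real_of_int \<lfloor>\<Sum>i\<in>B. y i\<rfloor>"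
  shows "(\<Sum>j\<in>C. (\<Sum>i\<in>B. x i j) * (1 - (\<Sum>i\<in>B. x i j)))
          \<ge> real u * ((1 / real u) * (\<Sum>j\<in>C. \<Sum>i\<in>B. x i j)
                        - real_of_int \<lfloor>(1 / real u) * (\<Sum>j\<in>C. \<Sum>i\<in>B. x i j)\<rfloor>)
                   * (real_of_int \<lceil>\<Sum>i\<in>B. y i\<rceil> - (\<Sum>i\<in>B. y i))"
proof -
  define Y where "Y = (\<Sum>i\<in>B. y i)"
  define a where "a j = (\<Sum>i\<in>B. x i j)" for j
  define S where "S = (\<Sum>j\<in>C. a j)"
  define k where "k = real_of_int \<lfloor>Y\<rfloor>"
  define d where "d = real_of_int \<lceil>Y\<rceil> - Y"
  have u: "real u > 0" using assms(1) by simp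
  have fB: "finite B" using assms(2,7) finite_subset by blast
  have Y0: "Y \<ge> 0" unfolding Y_def using assms(5,7) by (auto intro: sum_nonneg)
  have d0: "d \<ge> 0" "d \<le> 1" unfolding d_def by linarith+
  have a0: "a j \<ge> 0" if "j \<in> C" for j unfolding a_def using assms(4,7) that by (auto intro: sum_nonneg)
  have a1: "a j \<le> 1" if "j \<in> C" for j
  proof -
    have "a j \<le> (\<Sum>i\<in>F. x i j)" unfolding a_def
      by (rule sum_mono2[OF assms(2,7)]) (use assms(4) that in auto)
    then show ?thesis using assms(6)[OF that] by simp
  qed
  define J where "J = {j\<in>C. a j > 1 - d}"
  have JC: "J \<subseteq> C" unfolding J_def by auto
  have fJ: "finite J" using JC assms(3) finite_subset by blast
  have AJ: "(\<Sum>j\<in>J. a j) \<le> (1 - d) * real (card J) + d * real u * k"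
  proof -
    have "(\<Sum>j\<in>J. a j) = (\<Sum>i\<in>B. \<Sum>j\<in>J. x i j)" unfolding a_def by (rule sum.swap)
    also have "\<dots> \<le> capf u (card J) Y" using assms(8)[OF JC] unfolding Y_def .
    also have "\<dots> \<le> (1 - d) * real (card J) + d * real u * k"
      using capf_bound[OF assms(1) Y0] unfolding k_def d_def .
    finally show ?thesis .
  qed
  have pt: "a j * (1 - a j) \<ge> (if j \<in> J then (1 - d) * (1 - a j) else d * a j)" if "j \<in> C" for j
  proof (cases "j \<in> J")
    case True
    then have "a j \<ge> 1 - d" unfolding J_def by auto
    then have "(1 - a j) * (a j - (1 - d)) \<ge> 0" using a1[OF that] by simp
    then show ?thesis using True by (simp add: algebra_simps)
  next
    case False
    then have "a j \<le> 1 - d" unfolding J_def using that by auto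
    then have "a j * ((1 - a j) - d) \<ge> 0" using a0[OF that] by simp
    then show ?thesis using False by (simp add: algebra_simps)
  qed
  have "(\<Sum>j\<in>C. a j * (1 - a j)) \<ge> (\<Sum>j\<in>C. (if j \<in> J then (1 - d) * (1 - a j) else d * a j))"
    using pt by (rule sum_mono)
  also have "(\<Sum>j\<in>C. (if j \<in> J then (1 - d) * (1 - a j) else d * a j))
      = (\<Sum>j\<in>J. (1 - d) * (1 - a j)) + (\<Sum>j\<in>C-J. d * a j)"
  proof -
    have "(\<Sum>j\<in>C. (if j \<in> J then (1 - d) * (1 - a j) else d * a j))
        = (\<Sum>j\<in>C-J. (if j \<in> J then (1 - d) * (1 - a j) else d * a j)) + (\<Sum>j\<in>J. (if j \<in> J then (1 - d) * (1 - a j) else d * a j))"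
      by (rule sum.subset_diff[OF JC assms(3)])
    moreover have "(\<Sum>j\<in>J. (if j \<in> J then (1 - d) * (1 - a j) else d * a j)) = (\<Sum>j\<in>J. (1 - d) * (1 - a j))"
      by (rule sum.cong) auto
    moreover have "(\<Sum>j\<in>C-J. (if j \<in> J then (1 - d) * (1 - a j) else d * a j)) = (\<Sum>j\<in>C-J. d * a j)"
      by (rule sum.cong) auto
    ultimately show ?thesis by linarith
  qed
  also have "\<dots> = (1 - d) * (real (card J) - (\<Sum>j\<in>J. a j)) + d * (S - (\<Sum>j\<in>J. a j))"
    unfolding S_def using sum.subset_diff[OF JC assms(3), of a]
    by (simp add: sum_distrib_left[symmetric] sum_subtractf)
  finally have L: "(\<Sum>j\<in>C. a j * (1 - a j)) \<ge> d * (S - real u * k)"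
    using AJ by (simp add: algebra_simps)
  have flo: "real_of_int \<lfloor>S / real u\<rfloor> \<ge> k"
  proof -
    have "S / real u \<ge> k" using assms(9) unfolding S_def a_def k_def Y_def by simp
    then show ?thesis unfolding k_def by (simp add: le_floor_iff)
  qed
  have "real u * (S / real u - real_of_int \<lfloor>S / real u\<rfloor>) * d = d * (S - real u * real_of_int \<lfloor>S / real u\<rfloor>)"
    using u by (simp add: field_simps)
  also have "\<dots> \<le> d * (S - real u * k)"
    using flo u d0 by (intro mult_left_mono) auto
  finally show ?thesis using L unfolding a_def S_def Y_def d_def by simp
qed

end
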